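(* In the setting of the context, let $(\rho,C_r,C_b,\varphi)$ be a local solution of the planar Problem B with $w=e$, and let $\rho_0=\rho(0)$, $d_0=d_r(0)$, $k_0=\rho_0/d_0$, $\Delta_c=\frac{n_c}{n_c-1}$, $\delta=(\Delta_r-\Delta_b)^2-4k_0\Delta_r\Delta_b$ (which is $\ge0$). Then $$\frac{\rho''(0)}{\rho_0}=\frac{2+\big(\frac{\Delta_r}{n_r}+\frac{\Delta_b}{n_b}\big)\pm\sqrt\delta}{2}$$ for one choice of the sign, and in particular $\dfrac{\rho''(0)}{\rho_0}\in(\Delta_b,\Delta_r)$.
   Context: Planar setting: $x(t)=(\sin t,\cos t)$, $e=(0,1)$; refractive indices $n_b>n_r>1$, outside vacuum; $\Phi_\kappa(s)=s-\sqrt{\kappa^2-1+s^2}$. For positive $\rho\in C^2$, the curve $\rho(t)x(t)$ has outer unit normal $\nu_\rho(t)=\dfrac{(\rho\sin t-\rho'\cos t,\ \rho'\sin t+\rho\cos t)}{\sqrt{\rho^2+\rho'^2}}$. For $c\in\{r,b\}$ and a constant $C_c$: $m_c(t)=\frac1{n_c}\big(x(t)-\Phi_{n_c}(x(t)\cdot\nu_\rho(t))\nu_\rho(t)\big)$, $d_c(t)=\dfrac{C_c-\rho(t)(1-\cos t)}{n_c-e\cdot m_c(t)}$, $f_c(t)=\rho(t)x(t)+d_c(t)m_c(t)$; the curve $f_c$ refracts the color-$c$ ray $m_c(t)$ at $f_c(t)$ into $e$ by Snell's law. A local solution of Problem B: $\delta\in(0,\pi/2)$, positive $\rho\in C^2[-\delta,\delta]$,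 constants $C_r,C_b$ with $d_r,d_b>0$ and $f_r,f_b$ having a normal at every point, and a $C^1$ map $\varphi:[-\delta,\delta]\to[-\delta,\delta]$ with $f_r(t)=f_b(\varphi(t))$ for all $|t|\le\delta$. (For such a solution $d_r(0)=d_b(0)$.) *)

theory Defs
  imports "HOL-Analysis.Analysis"
begin

definition xv :: "real \<Rightarrow> real \<times> real" where
  "xv t = (sin t, cos t)"

definition ev :: "real \<times> real" where
  "ev = (0, 1)"

definition dot2 :: "real \<times> real \<Rightarrow> real \<times> real \<Rightarrow> real" where
  "dot2 u v = fst u * fst v + snd u * snd v"

definition Phi :: "real \<Rightarrow> real \<Rightarrow> real" where
  "Phi \<kappa> s = s - sqrt (\<kappa>\<^sup>2 - 1 + s\<^sup>2)"

text \<open>Outer unit normal of the curve rho(t) x(t); rho' is the derivative of rho.\<close>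
definition nu :: "(real \<Rightarrow> real) \<Rightarrow> (real \<Rightarrow> real) \<Rightarrow> real \<Rightarrow> real \<times> real" where
  "nu \<rho> \<rho>' t =
     (1 / sqrt ((\<rho> t)\<^sup>2 + (\<rho>' t)\<^sup>2)) *\<^sub>R
       (\<rho> t * sin t - \<rho>' t * cos t, \<rho>' t * sin t + \<rho> t * cos t)"

definition mc :: "real \<Rightarrow> (real \<Rightarrow> real) \<Rightarrow> (real \<Rightarrow> real) \<Rightarrow> real \<Rightarrow> real \<times> real" where
  "mc n \<rho> \<rho>' t =
     (1 / n) *\<^sub>R (xv t - Phi n (dot2 (xv t) (nu \<rho> \<rho>' t)) *\<^sub>R nu \<rho> \<rho>' t)"

definition dc :: "real \<Rightarrow> real \<Rightarrow> (real \<Rightarrow> real) \<Rightarrow> (real \<Rightarrow> real) \<Rightarrow> real \<Rightarrow> real" where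
  "dc n C \<rho> \<rho>' t = (C - \<rho> t * (1 - cos t)) / (n - dot2 ev (mc n \<rho> \<rho>' t))"

definition fc :: "real \<Rightarrow> real \<Rightarrow> (real \<Rightarrow> real) \<Rightarrow> (real \<Rightarrow> real) \<Rightarrow> real \<Rightarrow> real \<times> real" where
  "fc n C \<rho> \<rho>' t = \<rho> t *\<^sub>R xv t + dc n C \<rho> \<rho>' t *\<^sub>R mc n \<rho> \<rho>' t"

text \<open>Local solution of planar Problem B (with w = e) on [-del, del]:
  rho is positive and C^2 with first/second derivatives rho', rho'' (one-sided at the endpoints),
  d_r, d_b > 0, f_r, f_b have a (nonzero) tangent, hence a normal, at every point,
  and phi is a C^1 self-map of [-del, del] with f_r = f_b o phi.\<close>
definition local_solution ::
  "real \<Rightarrow> real \<Rightarrow> real \<Rightarrow> (real \<Rightarrow> real) \<Rightarrow> (real \<Rightarrow> real) \<Rightarrow> (real \<Rightarrow> real)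
   \<Rightarrow> real \<Rightarrow> real \<Rightarrow> (real \<Rightarrow> real) \<Rightarrow> bool" where
  "local_solution nr nb del \<rho> \<rho>' \<rho>'' Cr Cb \<phi> \<longleftrightarrow>
     0 < del \<and> del < pi / 2 \<and>
     (\<forall>t\<in>{-del..del}. 0 < \<rho> t) \<and>
     (\<forall>t\<in>{-del..del}. (\<rho> has_real_derivative \<rho>' t) (at t within {-del..del})) \<and>
     (\<forall>t\<in>{-del..del}. (\<rho>' has_real_derivative \<rho>'' t) (at t within {-del..del})) \<and>
     continuous_on {-del..del} \<rho>'' \<and>
     (\<forall>t\<in>{-del..del}. 0 < dc nr Cr \<rho> \<rho>' t \<and> 0 < dc nb Cb \<rho> \<rho>' t) \<and>
     (\<forall>t\<in>{-del..del}. \<exists>v. v \<noteq> 0 \<and>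
        (fc nr Cr \<rho> \<rho>' has_vector_derivative v) (at t within {-del..del})) \<and>
     (\<forall>t\<in>{-del..del}. \<exists>v. v \<noteq> 0 \<and>
        (fc nb Cb \<rho> \<rho>' has_vector_derivative v) (at t within {-del..del})) \<and>
     (\<exists>\<phi>'. (\<forall>t\<in>{-del..del}. (\<phi> has_real_derivative \<phi>' t) (at t within {-del..del}))
           \<and> continuous_on {-del..del} \<phi>') \<and>
     \<phi> ` {-del..del} \<subseteq> {-del..del} \<and>
     (\<forall>t\<in>{-del..del}. fc nr Cr \<rho> \<rho>' t = fc nb Cb \<rho> \<rho>' (\<phi> t))"

end

theory Submission imports Defs begin

definition "Sg \<rho> \<rho>' t = sqrt ((\<rho> t)\<^sup>2 + (\<rho>' t)\<^sup>2)"
definition "nu1 \<rho> \<rho>' t = (\<rho> t * sin t - \<rho>' t * cos t) / Sg \<rho> \<rho>' t"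
definition "nu2 \<rho> \<rho>' t = (\<rho>' t * sin t + \<rho> t * cos t) / Sg \<rho> \<rho>' t"
definition "sv \<rho> \<rho>' t = \<rho> t / Sg \<rho> \<rho>' t"
definition "Ph n \<rho> \<rho>' t = Phi n (sv \<rho> \<rho>' t)"
definition "N1 n \<rho> \<rho>' t = sin t - Ph n \<rho> \<rho>' t * nu1 \<rho> \<rho>' t"
definition "N2 n \<rho> \<rho>' t = cos t - Ph n \<rho> \<rho>' t * nu2 \<rho> \<rho>' t - 1"
definition "m1 n \<rho> \<rho>' t = N1 n \<rho> \<rho>' t / n"
definition "m2 n \<rho> \<rho>' t = (N2 n \<rho> \<rho>' t + 1) / n"
definition "dd n C \<rho> \<rho>' t = (C - \<rho> t * (1 - cos t)) / (n - m2 n \<rho> \<rho>' t)"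

lemma nu_eq: "nu \<rho> \<rho>' t = (nu1 \<rho> \<rho>' t, nu2 \<rho> \<rho>' t)"
  by (simp add: nu_def nu1_def nu2_def Sg_def)

lemma sv_eq: "dot2 (xv t) (nu \<rho> \<rho>' t) = sv \<rho> \<rho>' t"
proof -
  have e: "sin t * (\<rho> t * sin t - \<rho>' t * cos t) + cos t * (\<rho>' t * sin t + \<rho> t * cos t) = \<rho> t"
  proof -
    have "sin t * (\<rho> t * sin t - \<rho>' t * cos t) + cos t * (\<rho>' t * sin t + \<rho> t * cos t)
       = \<rho> t * ((sin t)\<^sup>2 + (cos t)\<^sup>2)" by algebra
    then show ?thesis by simp
  qed
  have "dot2 (xv t) (nu \<rho> \<rho>' t) = (sin t * (\<rho> t * sin t - \<rho>' t * cos t) + cos t * (\<rho>' t * sin t + \<rho> t * cos t)) / Sg \<rho> \<rho>' t"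
    by (simp add: nu_eq dot2_def xv_def nu1_def nu2_def) (simp add: divide_inverse algebra_simps)
  then show ?thesis by (simp add: sv_def e)
qed

lemma mc_eq: "mc n \<rho> \<rho>' t = (m1 n \<rho> \<rho>' t, m2 n \<rho> \<rho>' t)"
  unfolding mc_def sv_eq by (simp add: m1_def m2_def N1_def N2_def Ph_def nu_eq xv_def)

lemma dc_eq: "dc n C \<rho> \<rho>' t = dd n C \<rho> \<rho>' t"
  by (simp add: dc_def dd_def mc_eq ev_def dot2_def)

lemma fc_eq: "fc n C \<rho> \<rho>' t = (\<rho> t * sin t + dd n C \<rho> \<rho>' t * m1 n \<rho> \<rho>' t,
     \<rho> t * cos t + dd n C \<rho> \<rho>' t * m2 n \<rho> \<rho>' t)"
  by (simp add: fc_def dc_eq mc_eq xv_def)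

lemma unit_m:
  assumes "0 < \<rho> t" "1 < n"
  shows "(m1 n \<rho> \<rho>' t)\<^sup>2 + (m2 n \<rho> \<rho>' t)\<^sup>2 = 1"
proof -
  define S where "S = Sg \<rho> \<rho>' t"
  have S: "S > 0" "S\<^sup>2 = (\<rho> t)\<^sup>2 + (\<rho>' t)\<^sup>2" using assms by (auto simp: S_def Sg_def intro: add_pos_nonneg)
  define a b where "a = nu1 \<rho> \<rho>' t" and "b = nu2 \<rho> \<rho>' t"
  have ab: "a\<^sup>2 + b\<^sup>2 = 1"
  proof -
    have e: "(\<rho> t * sin t - \<rho>' t * cos t)\<^sup>2 + (\<rho>' t * sin t + \<rho> t * cos t)\<^sup>2
       = ((\<rho> t)\<^sup>2 + (\<rho>' t)\<^sup>2) * ((sin t)\<^sup>2 + (cos t)\<^sup>2)" by algebra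
    define A B where "A = \<rho> t * sin t - \<rho>' t * cos t" and "B = \<rho>' t * sin t + \<rho> t * cos t"
    have "a = A / S" "b = B / S" by (simp_all add: a_def b_def A_def B_def nu1_def nu2_def S_def)
    then have "a\<^sup>2 + b\<^sup>2 = (A\<^sup>2 + B\<^sup>2) / S\<^sup>2"
      by (simp add: power_divide add_divide_distrib)
    then have "a\<^sup>2 + b\<^sup>2 = ((\<rho> t * sin t - \<rho>' t * cos t)\<^sup>2 + (\<rho>' t * sin t + \<rho> t * cos t)\<^sup>2) / S\<^sup>2"
      by (simp add: A_def B_def)
    also have "\<dots> = S\<^sup>2 / S\<^sup>2" by (simp only: e S(2) sin_cos_squared_add mult_1_right)
    finally show ?thesis using S(1) by simp
  qed
  define s where "s = sv \<rho> \<rho>' t"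
  have s: "s = sin t * a + cos t * b"
    using sv_eq[of t \<rho> \<rho>'] by (simp add: s_def dot2_def xv_def nu_eq a_def b_def)
  define R where "R = sqrt (n\<^sup>2 - 1 + s\<^sup>2)"
  have R: "R\<^sup>2 = n\<^sup>2 - 1 + s\<^sup>2"
    proof -
    have "1 < n\<^sup>2" using assms(2) by (simp add: one_less_power)
    then have "0 \<le> n\<^sup>2 - 1 + s\<^sup>2" by (simp add: add_nonneg_nonneg)
    then show ?thesis unfolding R_def by simp
  qed
  have P: "Ph n \<rho> \<rho>' t = s - R" by (simp add: Ph_def Phi_def s_def R_def)
  have "(m1 n \<rho> \<rho>' t)\<^sup>2 + (m2 n \<rho> \<rho>' t)\<^sup>2 =
     ((sin t - (s - R) * a)\<^sup>2 + (cos t - (s-R)*b)\<^sup>2) / n\<^sup>2"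
    by (simp add: m1_def m2_def N1_def N2_def P a_def b_def power_divide add_divide_distrib)
  also have "(sin t - (s - R) * a)\<^sup>2 + (cos t - (s-R)*b)\<^sup>2 = n\<^sup>2"
  proof -
    have "(sin t - (s - R) * a)\<^sup>2 + (cos t - (s-R)*b)\<^sup>2
       = ((sin t)\<^sup>2 + (cos t)\<^sup>2) - 2*(s-R)*(sin t * a + cos t * b) + (s-R)\<^sup>2 * (a\<^sup>2+b\<^sup>2)"
      by algebra
    also have "\<dots> = 1 - 2 * (s - R) * s + (s - R)\<^sup>2" by (simp only: sin_cos_squared_add s[symmetric] ab mult_1_right)
    also have "\<dots> = n\<^sup>2" using R by algebra
    finally show ?thesis .
  qed
  finally show ?thesis using assms by simp
qed


lemma ex_deriv_Sg:
  assumes r: "(\<rho> has_real_derivative R1) (at t within S)"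
    and p: "(\<rho>' has_real_derivative P1) (at t within S)" and pos: "0 < \<rho> t"
  shows "\<exists>D. ((\<lambda>t. Sg \<rho> \<rho>' t) has_real_derivative D) (at t within S)"
proof -
  have q: "0 < (\<rho> t)\<^sup>2 + (\<rho>' t)\<^sup>2" using pos by (intro add_pos_nonneg) auto
  show ?thesis unfolding Sg_def
    using DERIV_chain2[OF DERIV_real_sqrt[OF q] DERIV_add[OF DERIV_power[OF r] DERIV_power[OF p]]] by blast
qed

lemma Sg_pos: "0 < \<rho> t \<Longrightarrow> 0 < Sg \<rho> \<rho>' t"
  unfolding Sg_def by (intro real_sqrt_gt_zero add_pos_nonneg) auto

lemma deriv_A1:
  assumes r: "(\<rho> has_real_derivative \<rho>' t) (at t within S)"
    and p: "(\<rho>' has_real_derivative Q) (at t within S)"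
  shows "((\<lambda>t. \<rho> t * sin t - \<rho>' t * cos t) has_real_derivative
           (\<rho>' t * sin t + \<rho> t * cos t) - (Q * cos t - \<rho>' t * sin t)) (at t within S)"
  by (rule derivative_eq_intros r p DERIV_sin DERIV_cos refl | simp)+

lemma deriv_A2:
  assumes r: "(\<rho> has_real_derivative \<rho>' t) (at t within S)"
    and p: "(\<rho>' has_real_derivative Q) (at t within S)"
  shows "\<exists>D. ((\<lambda>t. \<rho>' t * sin t + \<rho> t * cos t) has_real_derivative D) (at t within S)"
  using DERIV_add[OF DERIV_mult[OF p DERIV_sin[THEN DERIV_subset, OF subset_UNIV]] DERIV_mult[OF r DERIV_cos[THEN DERIV_subset, OF subset_UNIV]]] by blast

lemma ex_derivs:
  assumes r: "(\<rho> has_real_derivative \<rho>' t) (at t within S)"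
    and p: "(\<rho>' has_real_derivative Q) (at t within S)" and pos: "0 < \<rho> t" and n: "1 < n"
  shows "\<exists>D. ((\<lambda>t. nu1 \<rho> \<rho>' t) has_real_derivative D) (at t within S)"
    "\<exists>D. ((\<lambda>t. nu2 \<rho> \<rho>' t) has_real_derivative D) (at t within S)"
    "\<exists>D. ((\<lambda>t. sv \<rho> \<rho>' t) has_real_derivative D) (at t within S)"
    "\<exists>D. ((\<lambda>t. Ph n \<rho> \<rho>' t) has_real_derivative D) (at t within S)"
    "\<exists>D. ((\<lambda>t. N1 n \<rho> \<rho>' t) has_real_derivative D) (at t within S)"
    "\<exists>D. ((\<lambda>t. N2 n \<rho> \<rho>' t) has_real_derivative D) (at t within S)"
    "\<exists>D. ((\<lambda>t. m1 n \<rho> \<rho>' t) has_real_derivative D) (at t within S)"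
    "\<exists>D. ((\<lambda>t. m2 n \<rho> \<rho>' t) has_real_derivative D) (at t within S)"
    "\<exists>D. ((\<lambda>t. dd n C \<rho> \<rho>' t) has_real_derivative D) (at t within S)"
proof -
  obtain G where G: "((\<lambda>t. Sg \<rho> \<rho>' t) has_real_derivative G) (at t within S)"
    using ex_deriv_Sg[OF r p pos] by blast
  have Sp: "Sg \<rho> \<rho>' t \<noteq> 0" using Sg_pos[where \<rho>=\<rho> and \<rho>'=\<rho>' and t=t] pos by simp
  obtain A2 where A2: "((\<lambda>t. \<rho>' t * sin t + \<rho> t * cos t) has_real_derivative A2) (at t within S)"
    using deriv_A2[OF r p] by blast
  have e1: "(\<lambda>t. nu1 \<rho> \<rho>' t) = (\<lambda>t. (\<rho> t * sin t - \<rho>' t * cos t) / Sg \<rho> \<rho>' t)"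
    by (simp add: nu1_def)
  show d1: "\<exists>D. ((\<lambda>t. nu1 \<rho> \<rho>' t) has_real_derivative D) (at t within S)"
    unfolding e1 using DERIV_divide[OF deriv_A1[OF r p] G Sp] by blast
  have e2: "(\<lambda>t. nu2 \<rho> \<rho>' t) = (\<lambda>t. (\<rho>' t * sin t + \<rho> t * cos t) / Sg \<rho> \<rho>' t)"
    by (simp add: nu2_def)
  show d2: "\<exists>D. ((\<lambda>t. nu2 \<rho> \<rho>' t) has_real_derivative D) (at t within S)"
    unfolding e2 using DERIV_divide[OF A2 G Sp] by blast
  have e3: "(\<lambda>t. sv \<rho> \<rho>' t) = (\<lambda>t. \<rho> t / Sg \<rho> \<rho>' t)"
    by (simp add: sv_def)
  show d3: "\<exists>D. ((\<lambda>t. sv \<rho> \<rho>' t) has_real_derivative D) (at t within S)"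
    unfolding e3 using DERIV_divide[OF r G Sp] by blast
  then obtain V where V: "((\<lambda>t. sv \<rho> \<rho>' t) has_real_derivative V) (at t within S)" by blast
  have q: "0 < n\<^sup>2 - 1 + (sv \<rho> \<rho>' t)\<^sup>2"
  proof -
    have "1 < n\<^sup>2" using n by (simp add: one_less_power)
    then show ?thesis by (simp add: add_pos_nonneg)
  qed
  have e4: "(\<lambda>t. Ph n \<rho> \<rho>' t) = (\<lambda>t. sv \<rho> \<rho>' t - sqrt (n\<^sup>2 - 1 + (sv \<rho> \<rho>' t)\<^sup>2))"
    by (simp add: Ph_def Phi_def)
  show d4: "\<exists>D. ((\<lambda>t. Ph n \<rho> \<rho>' t) has_real_derivative D) (at t within S)"
    unfolding e4 using DERIV_diff[OF V DERIV_chain2[OF DERIV_real_sqrt[OF q] DERIV_add[OF DERIV_const DERIV_power[OF V]]]]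
    by blast
  then obtain P where P: "((\<lambda>t. Ph n \<rho> \<rho>' t) has_real_derivative P) (at t within S)" by blast
  obtain W1 where W1: "((\<lambda>t. nu1 \<rho> \<rho>' t) has_real_derivative W1) (at t within S)" using d1 by blast
  obtain W2 where W2: "((\<lambda>t. nu2 \<rho> \<rho>' t) has_real_derivative W2) (at t within S)" using d2 by blast
  have e5: "(\<lambda>t. N1 n \<rho> \<rho>' t) = (\<lambda>t. sin t - Ph n \<rho> \<rho>' t * nu1 \<rho> \<rho>' t)"
    by (simp add: N1_def)
  show d5: "\<exists>D. ((\<lambda>t. N1 n \<rho> \<rho>' t) has_real_derivative D) (at t within S)"
    unfolding e5 using DERIV_diff[OF DERIV_sin[THEN DERIV_subset, OF subset_UNIV] DERIV_mult[OF P W1]] by blast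
  have e6: "(\<lambda>t. N2 n \<rho> \<rho>' t) = (\<lambda>t. cos t - Ph n \<rho> \<rho>' t * nu2 \<rho> \<rho>' t - 1)"
    by (simp add: N2_def)
  show d6: "\<exists>D. ((\<lambda>t. N2 n \<rho> \<rho>' t) has_real_derivative D) (at t within S)"
    unfolding e6 using DERIV_diff[OF DERIV_diff[OF DERIV_cos[THEN DERIV_subset, OF subset_UNIV] DERIV_mult[OF P W2]] DERIV_const] by blast
  obtain Z1 where Z1: "((\<lambda>t. N1 n \<rho> \<rho>' t) has_real_derivative Z1) (at t within S)" using d5 by blast
  obtain Z2 where Z2: "((\<lambda>t. N2 n \<rho> \<rho>' t) has_real_derivative Z2) (at t within S)" using d6 by blast
  have e7: "(\<lambda>t. m1 n \<rho> \<rho>' t) = (\<lambda>t. N1 n \<rho> \<rho>' t / n)" by (simp add: m1_def)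
  show "\<exists>D. ((\<lambda>t. m1 n \<rho> \<rho>' t) has_real_derivative D) (at t within S)"
    unfolding e7 using DERIV_divide[OF Z1 DERIV_const, of n] n by auto
  have e8: "(\<lambda>t. m2 n \<rho> \<rho>' t) = (\<lambda>t. (N2 n \<rho> \<rho>' t + 1) / n)" by (simp add: m2_def)
  show d8: "\<exists>D. ((\<lambda>t. m2 n \<rho> \<rho>' t) has_real_derivative D) (at t within S)"
    unfolding e8 using DERIV_divide[OF DERIV_add[OF Z2 DERIV_const] DERIV_const, of n] n by auto
  then obtain M2 where M2: "((\<lambda>t. m2 n \<rho> \<rho>' t) has_real_derivative M2) (at t within S)" by blast
  have "(m2 n \<rho> \<rho>' t)\<^sup>2 \<le> 1" using unit_m[where \<rho>=\<rho> and \<rho>'=\<rho>' and t=t and n=n] pos n by (smt (verit) zero_le_power2)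
  then have "\<bar>m2 n \<rho> \<rho>' t\<bar> \<le> 1" by (simp add: abs_square_le_1)
  then have nz: "n - m2 n \<rho> \<rho>' t \<noteq> 0" using n by auto
  have e9: "(\<lambda>t. dd n C \<rho> \<rho>' t) = (\<lambda>t. (C - \<rho> t * (1 - cos t)) / (n - m2 n \<rho> \<rho>' t))"
    by (simp add: dd_def)
  show "\<exists>D. ((\<lambda>t. dd n C \<rho> \<rho>' t) has_real_derivative D) (at t within S)"
    unfolding e9 using DERIV_divide[OF DERIV_diff[OF DERIV_const DERIV_mult[OF r DERIV_diff[OF DERIV_const DERIV_cos[THEN DERIV_subset, OF subset_UNIV]]]] DERIV_diff[OF DERIV_const M2] nz]
    by blast
qed

lemma deriv_unique_I:
  assumes "0 < del" "t \<in> {-del..del}"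
    "(f has_real_derivative a) (at t within {-del..del})"
    "(f has_real_derivative b) (at t within {-del..del})"
  shows "a = b"
  using vector_derivative_unique_within_closed_interval[of "-del" del t f a b] assms
  by (simp add: has_real_derivative_iff_has_vector_derivative)

lemma deriv_eq_on:
  assumes "0 < del" "t \<in> {-del..del}" "\<And>x. x \<in> {-del..del} \<Longrightarrow> f x = g x"
    "(f has_real_derivative a) (at t within {-del..del})"
    "(g has_real_derivative b) (at t within {-del..del})"
  shows "a = b"
proof -
  have "(f has_real_derivative b) (at t within {-del..del})"
    using assms(5) unfolding has_real_derivative_iff_has_vector_derivative
    by (intro has_vector_derivative_transform[where f=g and g=f, OF assms(2)]) (simp_all add: assms(3))
  then show ?thesis using deriv_unique_I[OF assms(1,2,4)] by simp
qed

lemma nu_perp: "nu1 \<rho> \<rho>' t * (\<rho>' t * sin t + \<rho> t * cos t) + nu2 \<rho> \<rho>' t * (\<rho>' t * cos t - \<rho> t * sin t) = 0"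
proof -
  have "(\<rho> t * sin t - \<rho>' t * cos t) * (\<rho>' t * sin t + \<rho> t * cos t) + (\<rho>' t * sin t + \<rho> t * cos t) * (\<rho>' t * cos t - \<rho> t * sin t) = 0"
    by algebra
  then have "(\<rho> t * sin t - \<rho>' t * cos t) * (\<rho>' t * sin t + \<rho> t * cos t) / Sg \<rho> \<rho>' t + (\<rho>' t * sin t + \<rho> t * cos t) * (\<rho>' t * cos t - \<rho> t * sin t) / Sg \<rho> \<rho>' t = 0"
    by (simp add: add_divide_distrib[symmetric])
  then show ?thesis by (simp add: nu1_def nu2_def)
qed

lemma fc_normal:
  assumes del: "0 < del" and t: "t \<in> {-del..del}" and n: "1 < n"
    and pos: "\<forall>x\<in>{-del..del}. 0 < \<rho> x"
    and r: "\<forall>x\<in>{-del..del}. (\<rho> has_real_derivative \<rho>' x) (at x within {-del..del})"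
    and p: "\<forall>x\<in>{-del..del}. (\<rho>' has_real_derivative \<rho>'' x) (at x within {-del..del})"
    and v: "(fc n C \<rho> \<rho>' has_vector_derivative v) (at t within {-del..del})"
  shows "fst v * N1 n \<rho> \<rho>' t + snd v * N2 n \<rho> \<rho>' t = 0"
proof -
  let ?I = "{-del..del}"
  have rt: "(\<rho> has_real_derivative \<rho>' t) (at t within ?I)" using r t by blast
  have pt: "(\<rho>' has_real_derivative \<rho>'' t) (at t within ?I)" using p t by blast
  have post: "0 < \<rho> t" using pos t by blast
  note E = ex_derivs[OF rt pt post n]
  obtain M1 where M1: "((\<lambda>t. m1 n \<rho> \<rho>' t) has_real_derivative M1) (at t within ?I)" using E(7) by blast
  obtain M2 where M2: "((\<lambda>t. m2 n \<rho> \<rho>' t) has_real_derivative M2) (at t within ?I)" using E(8) by blast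
  obtain Dd where Dd: "((\<lambda>t. dd n C \<rho> \<rho>' t) has_real_derivative Dd) (at t within ?I)" using E(9)[of C] by blast
  have sinI: "(sin has_real_derivative cos t) (at t within ?I)" by (rule DERIV_sin[THEN DERIV_subset, OF subset_UNIV])
  have cosI: "(cos has_real_derivative - sin t) (at t within ?I)" by (rule DERIV_cos[THEN DERIV_subset, OF subset_UNIV])
  note f1 = DERIV_add[OF DERIV_mult[OF rt sinI] DERIV_mult[OF Dd M1]]
  note f2 = DERIV_add[OF DERIV_mult[OF rt cosI] DERIV_mult[OF Dd M2]]
  have feq: "fc n C \<rho> \<rho>' = (\<lambda>t. (\<rho> t * sin t + dd n C \<rho> \<rho>' t * m1 n \<rho> \<rho>' t,
     \<rho> t * cos t + dd n C \<rho> \<rho>' t * m2 n \<rho> \<rho>' t))" by (rule ext) (simp add: fc_eq)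
  have vv: "(fc n C \<rho> \<rho>' has_vector_derivative
      (\<rho>' t * sin t + cos t * \<rho> t + (Dd * m1 n \<rho> \<rho>' t + M1 * dd n C \<rho> \<rho>' t),
       \<rho>' t * cos t + - sin t * \<rho> t + (Dd * m2 n \<rho> \<rho>' t + M2 * dd n C \<rho> \<rho>' t))) (at t within ?I)"
    unfolding feq using f1 f2
    by (intro has_vector_derivative_Pair) (simp_all add: has_real_derivative_iff_has_vector_derivative)
  have vE: "v = (\<rho>' t * sin t + cos t * \<rho> t + (Dd * m1 n \<rho> \<rho>' t + M1 * dd n C \<rho> \<rho>' t),
       \<rho>' t * cos t + - sin t * \<rho> t + (Dd * m2 n \<rho> \<rho>' t + M2 * dd n C \<rho> \<rho>' t))"
    using vector_derivative_unique_within_closed_interval[of "-del" del t "fc n C \<rho> \<rho>'"] v vv del t by simp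
  have unit: "m1 n \<rho> \<rho>' t * M1 + m2 n \<rho> \<rho>' t * M2 = 0"
  proof -
    have "2 * (M1 * m1 n \<rho> \<rho>' t ^ 1) + 2 * (M2 * m2 n \<rho> \<rho>' t ^ 1) = 0"
      using deriv_eq_on[OF del t _ DERIV_add[OF DERIV_power[OF M1, of 2] DERIV_power[OF M2, of 2]] DERIV_const[of 1]]
        unit_m n pos by simp
    then show ?thesis by (simp add: algebra_simps)
  qed
  have mlt: "\<bar>m2 n \<rho> \<rho>' x\<bar> \<le> 1" if "x \<in> ?I" for x
  proof -
    have "(m2 n \<rho> \<rho>' x)\<^sup>2 \<le> 1" using unit_m[where \<rho>=\<rho> and \<rho>'=\<rho>' and t=x and n=n] pos n that by (smt (verit) zero_le_power2)
    then show ?thesis by (simp add: abs_square_le_1)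
  qed
  have deq: "dd n C \<rho> \<rho>' x * (n - m2 n \<rho> \<rho>' x) = C - \<rho> x * (1 - cos x)" if "x \<in> ?I" for x
  proof -
    have "n - m2 n \<rho> \<rho>' x \<noteq> 0" using mlt[OF that] n by auto
    then show ?thesis by (simp add: dd_def)
  qed
  have drel: "Dd * (n - m2 n \<rho> \<rho>' t) + (0 - M2) * dd n C \<rho> \<rho>' t = 0 - (\<rho>' t * (1 - cos t) + (0 - - sin t) * \<rho> t)"
    using deriv_eq_on[OF del t deq DERIV_mult[OF Dd DERIV_diff[OF DERIV_const M2]]
        DERIV_diff[OF DERIV_const DERIV_mult[OF rt DERIV_diff[OF DERIV_const cosI]]]] by simp
  have n0: "n \<noteq> 0" using n by simp
  have N1e: "N1 n \<rho> \<rho>' t = n * m1 n \<rho> \<rho>' t" using n0 by (simp add: m1_def)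
  have N2e: "N2 n \<rho> \<rho>' t = n * m2 n \<rho> \<rho>' t - 1" using n0 by (simp add: m2_def)
  have N1d: "N1 n \<rho> \<rho>' t = sin t - Ph n \<rho> \<rho>' t * nu1 \<rho> \<rho>' t" by (simp add: N1_def)
  have N2d: "N2 n \<rho> \<rho>' t = cos t - Ph n \<rho> \<rho>' t * nu2 \<rho> \<rho>' t - 1" by (simp add: N2_def)
  have um: "(m1 n \<rho> \<rho>' t)\<^sup>2 + (m2 n \<rho> \<rho>' t)\<^sup>2 = 1" using unit_m n post by blast
  have sc: "(sin t)\<^sup>2 + (cos t)\<^sup>2 = 1" by simp
  note perp = nu_perp[of \<rho> \<rho>' t]
  show ?thesis unfolding vE fst_conv snd_conv
    using unit drel N1e N2e N1d N2d um sc perp by algebra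
qed

lemma fc_fst:
  assumes del: "0 < del" and t: "t \<in> {-del..del}" and n: "1 < n"
    and pos: "\<forall>x\<in>{-del..del}. 0 < \<rho> x"
    and r: "\<forall>x\<in>{-del..del}. (\<rho> has_real_derivative \<rho>' x) (at x within {-del..del})"
    and p: "\<forall>x\<in>{-del..del}. (\<rho>' has_real_derivative \<rho>'' x) (at x within {-del..del})"
    and v: "(fc n C \<rho> \<rho>' has_vector_derivative v) (at t within {-del..del})"
  shows "\<exists>Dd M1. ((\<lambda>t. m1 n \<rho> \<rho>' t) has_real_derivative M1) (at t within {-del..del}) \<and>
     fst v = \<rho>' t * sin t + cos t * \<rho> t + (Dd * m1 n \<rho> \<rho>' t + M1 * dd n C \<rho> \<rho>' t)"
proof -
  let ?I = "{-del..del}"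
  have rt: "(\<rho> has_real_derivative \<rho>' t) (at t within ?I)" using r t by blast
  have pt: "(\<rho>' has_real_derivative \<rho>'' t) (at t within ?I)" using p t by blast
  have post: "0 < \<rho> t" using pos t by blast
  note E = ex_derivs[OF rt pt post n]
  obtain M1 where M1: "((\<lambda>t. m1 n \<rho> \<rho>' t) has_real_derivative M1) (at t within ?I)" using E(7) by blast
  obtain M2 where M2: "((\<lambda>t. m2 n \<rho> \<rho>' t) has_real_derivative M2) (at t within ?I)" using E(8) by blast
  obtain Dd where Dd: "((\<lambda>t. dd n C \<rho> \<rho>' t) has_real_derivative Dd) (at t within ?I)" using E(9)[of C] by blast
  have sinI: "(sin has_real_derivative cos t) (at t within ?I)" by (rule DERIV_sin[THEN DERIV_subset, OF subset_UNIV])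
  have cosI: "(cos has_real_derivative - sin t) (at t within ?I)" by (rule DERIV_cos[THEN DERIV_subset, OF subset_UNIV])
  note f1 = DERIV_add[OF DERIV_mult[OF rt sinI] DERIV_mult[OF Dd M1]]
  note f2 = DERIV_add[OF DERIV_mult[OF rt cosI] DERIV_mult[OF Dd M2]]
  have feq: "fc n C \<rho> \<rho>' = (\<lambda>t. (\<rho> t * sin t + dd n C \<rho> \<rho>' t * m1 n \<rho> \<rho>' t,
     \<rho> t * cos t + dd n C \<rho> \<rho>' t * m2 n \<rho> \<rho>' t))" by (rule ext) (simp add: fc_eq)
  have vv: "(fc n C \<rho> \<rho>' has_vector_derivative
      (\<rho>' t * sin t + cos t * \<rho> t + (Dd * m1 n \<rho> \<rho>' t + M1 * dd n C \<rho> \<rho>' t),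
       \<rho>' t * cos t + - sin t * \<rho> t + (Dd * m2 n \<rho> \<rho>' t + M2 * dd n C \<rho> \<rho>' t))) (at t within ?I)"
    unfolding feq using f1 f2
    by (intro has_vector_derivative_Pair) (simp_all add: has_real_derivative_iff_has_vector_derivative)
  have vE: "v = (\<rho>' t * sin t + cos t * \<rho> t + (Dd * m1 n \<rho> \<rho>' t + M1 * dd n C \<rho> \<rho>' t),
       \<rho>' t * cos t + - sin t * \<rho> t + (Dd * m2 n \<rho> \<rho>' t + M2 * dd n C \<rho> \<rho>' t))"
    using vector_derivative_unique_within_closed_interval[of "-del" del t "fc n C \<rho> \<rho>'"] v vv del t by simp
  show ?thesis using M1 vE by auto
qed

lemma det_zero:
  assumes del: "0 < del" and t: "t \<in> {-del..del}" and nr: "1 < nr" and nb: "1 < nb"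
    and pos: "\<forall>x\<in>{-del..del}. 0 < \<rho> x"
    and r: "\<forall>x\<in>{-del..del}. (\<rho> has_real_derivative \<rho>' x) (at x within {-del..del})"
    and p: "\<forall>x\<in>{-del..del}. (\<rho>' has_real_derivative \<rho>'' x) (at x within {-del..del})"
    and ph: "\<forall>x\<in>{-del..del}. (\<phi> has_real_derivative \<phi>' x) (at x within {-del..del})"
    and im: "\<phi> ` {-del..del} \<subseteq> {-del..del}"
    and eq: "\<forall>x\<in>{-del..del}. fc nr Cr \<rho> \<rho>' x = fc nb Cb \<rho> \<rho>' (\<phi> x)"
    and vr: "(fc nr Cr \<rho> \<rho>' has_vector_derivative vr) (at t within {-del..del})" "vr \<noteq> 0"
    and vb: "(fc nb Cb \<rho> \<rho>' has_vector_derivative vb) (at (\<phi> t) within {-del..del})"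
  shows "vr = \<phi>' t *\<^sub>R vb"
    "N1 nr \<rho> \<rho>' t * N2 nb \<rho> \<rho>' (\<phi> t) - N2 nr \<rho> \<rho>' t * N1 nb \<rho> \<rho>' (\<phi> t) = 0"
proof -
  let ?I = "{-del..del}"
  have pt: "\<phi> t \<in> ?I" using im t by blast
  have phv: "(\<phi> has_vector_derivative \<phi>' t) (at t within ?I)"
    using ph t by (simp add: has_real_derivative_iff_has_vector_derivative)
  have vb': "(fc nb Cb \<rho> \<rho>' has_vector_derivative vb) (at (\<phi> t) within \<phi> ` ?I)"
    by (rule has_vector_derivative_within_subset[OF vb im])
  have ch: "(fc nb Cb \<rho> \<rho>' \<circ> \<phi> has_vector_derivative \<phi>' t *\<^sub>R vb) (at t within ?I)"
    by (rule vector_diff_chain_within[OF phv vb'])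
  have ch2: "(fc nr Cr \<rho> \<rho>' has_vector_derivative \<phi>' t *\<^sub>R vb) (at t within ?I)"
    by (rule has_vector_derivative_transform[OF t _ ch]) (simp add: eq)
  show vE: "vr = \<phi>' t *\<^sub>R vb"
    using vector_derivative_unique_within_closed_interval[of "-del" del t "fc nr Cr \<rho> \<rho>'"] vr(1) ch2 del t by simp
  have n1: "fst vr * N1 nr \<rho> \<rho>' t + snd vr * N2 nr \<rho> \<rho>' t = 0"
    by (rule fc_normal[OF del t nr pos r p vr(1)])
  have n2: "fst vb * N1 nb \<rho> \<rho>' (\<phi> t) + snd vb * N2 nb \<rho> \<rho>' (\<phi> t) = 0"
    by (rule fc_normal[OF del pt nb pos r p vb])
  have n3: "fst vr * N1 nb \<rho> \<rho>' (\<phi> t) + snd vr * N2 nb \<rho> \<rho>' (\<phi> t) = 0"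
  proof -
    have "fst vr * N1 nb \<rho> \<rho>' (\<phi> t) + snd vr * N2 nb \<rho> \<rho>' (\<phi> t)
       = \<phi>' t * (fst vb * N1 nb \<rho> \<rho>' (\<phi> t) + snd vb * N2 nb \<rho> \<rho>' (\<phi> t))"
      by (simp add: vE algebra_simps)
    then show ?thesis using n2 by simp
  qed
  have nz: "fst vr \<noteq> 0 \<or> snd vr \<noteq> 0" using vr(2) by (auto simp: prod_eq_iff)
  define X1 X2 Y1 Y2 where "X1 = N1 nr \<rho> \<rho>' t" and "X2 = N2 nr \<rho> \<rho>' t"
    and "Y1 = N1 nb \<rho> \<rho>' (\<phi> t)" and "Y2 = N2 nb \<rho> \<rho>' (\<phi> t)"
  have a: "fst vr * (X1 * Y2 - X2 * Y1) = 0" using n1 n3 unfolding X1_def X2_def Y1_def Y2_def by algebra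
  have b: "snd vr * (X1 * Y2 - X2 * Y1) = 0" using n1 n3 unfolding X1_def X2_def Y1_def Y2_def by algebra
  show "N1 nr \<rho> \<rho>' t * N2 nb \<rho> \<rho>' (\<phi> t) - N2 nr \<rho> \<rho>' t * N1 nb \<rho> \<rho>' (\<phi> t) = 0"
    using a b nz unfolding X1_def X2_def Y1_def Y2_def by auto
qed


lemma at_flat:
  assumes "\<rho>' t = 0" "0 < \<rho> t" "1 < n"
  shows "Sg \<rho> \<rho>' t = \<rho> t" "nu1 \<rho> \<rho>' t = sin t" "nu2 \<rho> \<rho>' t = cos t" "sv \<rho> \<rho>' t = 1"
    "Ph n \<rho> \<rho>' t = 1 - n" "N1 n \<rho> \<rho>' t = n * sin t" "N2 n \<rho> \<rho>' t = n * cos t - 1"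
    "m1 n \<rho> \<rho>' t = sin t" "m2 n \<rho> \<rho>' t = cos t"
proof -
  show S: "Sg \<rho> \<rho>' t = \<rho> t" using assms by (simp add: Sg_def)
  show a: "nu1 \<rho> \<rho>' t = sin t" "nu2 \<rho> \<rho>' t = cos t" "sv \<rho> \<rho>' t = 1"
    using assms by (simp_all add: nu1_def nu2_def sv_def S)
  show P: "Ph n \<rho> \<rho>' t = 1 - n" using assms by (simp add: Ph_def Phi_def a)
  show "N1 n \<rho> \<rho>' t = n * sin t" "N2 n \<rho> \<rho>' t = n * cos t - 1"
    by (simp_all add: N1_def N2_def P a algebra_simps)
  then show "m1 n \<rho> \<rho>' t = sin t" "m2 n \<rho> \<rho>' t = cos t"
    using assms by (simp_all add: m1_def m2_def)
qed

lemma cross_eq: "sin t * nu2 \<rho> \<rho>' t - cos t * nu1 \<rho> \<rho>' t = \<rho>' t / Sg \<rho> \<rho>' t"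
proof -
  have e: "sin t * (\<rho>' t * sin t + \<rho> t * cos t) - cos t * (\<rho> t * sin t - \<rho>' t * cos t) = \<rho>' t"
  proof -
    have "sin t * (\<rho>' t * sin t + \<rho> t * cos t) - cos t * (\<rho> t * sin t - \<rho>' t * cos t)
       = \<rho>' t * ((sin t)\<^sup>2 + (cos t)\<^sup>2)" by algebra
    then show ?thesis by simp
  qed
  have "sin t * nu2 \<rho> \<rho>' t - cos t * nu1 \<rho> \<rho>' t = (sin t * (\<rho>' t * sin t + \<rho> t * cos t) - cos t * (\<rho> t * sin t - \<rho>' t * cos t)) / Sg \<rho> \<rho>' t"
    by (simp add: nu1_def nu2_def) (simp add: divide_inverse algebra_simps)
  then show ?thesis by (simp add: e)
qed

lemma cross_lemma:
  fixes n m1 m2 sn cs P a b :: real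
  assumes h1: "n*m1 = sn - P*a" and h2: "n*m2 = cs - P*b" and sc: "sn\<^sup>2 + cs\<^sup>2 = 1"
  shows "sn*b - cs*a = n*((sn*b - cs*a)*(sn*m1 + cs*m2) - (sn*m2 - cs*m1)*(sn*a + cs*b))"
proof -
  have X: "n*(sn*m2 - cs*m1) = sn*(n*m2) - cs*(n*m1)" by (simp add: algebra_simps)
  also have "\<dots> = sn*(cs - P*b) - cs*(sn - P*a)" by (simp only: h1 h2)
  also have "\<dots> = - P*(sn*b - cs*a)" by (simp add: algebra_simps)
  finally have X: "n*(sn*m2 - cs*m1) = - P*(sn*b - cs*a)" .
  have "n*(sn*m1 + cs*m2) = sn*(n*m1) + cs*(n*m2)" by (simp add: algebra_simps)
  also have "\<dots> = sn*(sn - P*a) + cs*(cs - P*b)" by (simp only: h1 h2)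
  also have "\<dots> = (sn\<^sup>2 + cs\<^sup>2) - P*(sn*a + cs*b)" by (simp add: algebra_simps power2_eq_square)
  finally have Y: "n*(sn*m1 + cs*m2) = 1 - P*(sn*a + cs*b)" using sc by simp
  have "n*((sn*b - cs*a)*(sn*m1 + cs*m2) - (sn*m2 - cs*m1)*(sn*a + cs*b))
     = (sn*b - cs*a)*(n*(sn*m1 + cs*m2)) - (n*(sn*m2 - cs*m1))*(sn*a + cs*b)" by (simp add: algebra_simps)
  also have "\<dots> = (sn*b - cs*a)*(1 - P*(sn*a + cs*b)) + P*(sn*b - cs*a)*(sn*a + cs*b)" by (simp only: X Y)
  also have "\<dots> = sn*b - cs*a" by (simp add: algebra_simps)
  finally show ?thesis by simp
qed

lemma fixed_zero:
  assumes del: "0 < del" "del < pi / 2" and nr: "1 < nr" and nrb: "nr < nb"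
    and pos: "\<forall>x\<in>{-del..del}. 0 < \<rho> x"
    and r: "\<forall>x\<in>{-del..del}. (\<rho> has_real_derivative \<rho>' x) (at x within {-del..del})"
    and p: "\<forall>x\<in>{-del..del}. (\<rho>' has_real_derivative \<rho>'' x) (at x within {-del..del})"
    and ph: "\<forall>x\<in>{-del..del}. (\<phi> has_real_derivative \<phi>' x) (at x within {-del..del})"
    and im: "\<phi> ` {-del..del} \<subseteq> {-del..del}"
    and eq: "\<forall>x\<in>{-del..del}. fc nr Cr \<rho> \<rho>' x = fc nb Cb \<rho> \<rho>' (\<phi> x)"
    and dpos: "\<forall>x\<in>{-del..del}. 0 < dc nr Cr \<rho> \<rho>' x \<and> 0 < dc nb Cb \<rho> \<rho>' x"
    and vr: "\<forall>x\<in>{-del..del}. \<exists>v. v \<noteq> 0 \<and> (fc nr Cr \<rho> \<rho>' has_vector_derivative v) (at x within {-del..del})"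
    and vb: "\<forall>x\<in>{-del..del}. \<exists>v. v \<noteq> 0 \<and> (fc nb Cb \<rho> \<rho>' has_vector_derivative v) (at x within {-del..del})"
  shows "\<phi> 0 = 0" "\<rho>' 0 = 0" "dd nr Cr \<rho> \<rho>' 0 = dd nb Cb \<rho> \<rho>' 0"
proof -
  let ?I = "{-del..del}"
  have nb: "1 < nb" using nr nrb by simp
  have cont: "continuous_on ?I (\<lambda>x. \<phi> x - x)"
  proof -
    have "continuous_on ?I \<phi>"
      unfolding continuous_on_eq_continuous_within using ph DERIV_continuous by blast
    then show ?thesis by (intro continuous_intros)
  qed
  have "del \<in> ?I" "-del \<in> ?I" using del by auto
  then have "\<phi> del \<in> ?I" "\<phi> (-del) \<in> ?I" using im by (blast, blast)
  then have "\<phi> del \<le> del" "- del \<le> \<phi> (-del)" by auto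
  then have "\<exists>x. -del \<le> x \<and> x \<le> del \<and> \<phi> x - x = 0"
    using del by (intro IVT2'[of "\<lambda>x. \<phi> x - x" del 0 "-del", OF _ _ _ cont]) auto
  then obtain t0 where t0: "-del \<le> t0" "t0 \<le> del" "\<phi> t0 - t0 = 0" by blast
  have t0I: "t0 \<in> ?I" using t0 by simp
  have fix0: "\<phi> t0 = t0" using t0 by simp
  have post: "0 < \<rho> t0" using pos t0I by blast
  define dr db where "dr = dd nr Cr \<rho> \<rho>' t0" and "db = dd nb Cb \<rho> \<rho>' t0"
  have drp: "0 < dr" and dbp: "0 < db" using dpos t0I by (auto simp: dr_def db_def dc_eq)
  have E0: "fc nr Cr \<rho> \<rho>' t0 = fc nb Cb \<rho> \<rho>' (\<phi> t0)" using eq t0I by blast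
  have E: "fc nr Cr \<rho> \<rho>' t0 = fc nb Cb \<rho> \<rho>' t0" using E0 unfolding fix0 .
  have e1: "dr * m1 nr \<rho> \<rho>' t0 = db * m1 nb \<rho> \<rho>' t0" and e2: "dr * m2 nr \<rho> \<rho>' t0 = db * m2 nb \<rho> \<rho>' t0"
    using E by (simp_all add: fc_eq dr_def db_def)
  have ur: "(m1 nr \<rho> \<rho>' t0)\<^sup>2 + (m2 nr \<rho> \<rho>' t0)\<^sup>2 = 1" using unit_m post nr by blast
  have ub: "(m1 nb \<rho> \<rho>' t0)\<^sup>2 + (m2 nb \<rho> \<rho>' t0)\<^sup>2 = 1" using unit_m post nb by blast
  have "dr\<^sup>2 = db\<^sup>2"
  proof -
    have "dr\<^sup>2 = dr\<^sup>2 * ((m1 nr \<rho> \<rho>' t0)\<^sup>2 + (m2 nr \<rho> \<rho>' t0)\<^sup>2)" using ur by simp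
    also have "\<dots> = (dr * m1 nr \<rho> \<rho>' t0)\<^sup>2 + (dr * m2 nr \<rho> \<rho>' t0)\<^sup>2" by algebra
    also have "\<dots> = (db * m1 nb \<rho> \<rho>' t0)\<^sup>2 + (db * m2 nb \<rho> \<rho>' t0)\<^sup>2" by (simp add: e1 e2)
    also have "\<dots> = db\<^sup>2 * ((m1 nb \<rho> \<rho>' t0)\<^sup>2 + (m2 nb \<rho> \<rho>' t0)\<^sup>2)" by algebra
    finally show ?thesis using ub by simp
  qed
  then have deq: "dr = db" using drp dbp by (simp add: power2_eq_iff)
  have m1e: "m1 nr \<rho> \<rho>' t0 = m1 nb \<rho> \<rho>' t0" using e1 deq drp by simp
  have m2e: "m2 nr \<rho> \<rho>' t0 = m2 nb \<rho> \<rho>' t0" using e2 deq drp by simp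
  define c where "c = sin t0 * nu2 \<rho> \<rho>' t0 - cos t0 * nu1 \<rho> \<rho>' t0"
  define s where "s = sin t0 * nu1 \<rho> \<rho>' t0 + cos t0 * nu2 \<rho> \<rho>' t0"
  define X where "X = sin t0 * m2 nr \<rho> \<rho>' t0 - cos t0 * m1 nr \<rho> \<rho>' t0"
  define Y where "Y = sin t0 * m1 nr \<rho> \<rho>' t0 + cos t0 * m2 nr \<rho> \<rho>' t0"
  have sc: "(sin t0)\<^sup>2 + (cos t0)\<^sup>2 = 1" by simp
  have c0: "c = 0"
  proof -
    have h1: "nr * m1 nr \<rho> \<rho>' t0 = sin t0 - Ph nr \<rho> \<rho>' t0 * nu1 \<rho> \<rho>' t0"
      "nr * m2 nr \<rho> \<rho>' t0 = cos t0 - Ph nr \<rho> \<rho>' t0 * nu2 \<rho> \<rho>' t0"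
      using nr by (simp_all add: m1_def m2_def N1_def N2_def)
    have h2': "nb * m1 nb \<rho> \<rho>' t0 = sin t0 - Ph nb \<rho> \<rho>' t0 * nu1 \<rho> \<rho>' t0"
      "nb * m2 nb \<rho> \<rho>' t0 = cos t0 - Ph nb \<rho> \<rho>' t0 * nu2 \<rho> \<rho>' t0"
      using nb by (simp_all add: m1_def m2_def N1_def N2_def)
    have h2: "nb * m1 nr \<rho> \<rho>' t0 = sin t0 - Ph nb \<rho> \<rho>' t0 * nu1 \<rho> \<rho>' t0"
      "nb * m2 nr \<rho> \<rho>' t0 = cos t0 - Ph nb \<rho> \<rho>' t0 * nu2 \<rho> \<rho>' t0"
      using h2' unfolding m1e m2e .
    have k1: "c = nr * (c * Y - X * s)"
      unfolding c_def s_def X_def Y_def by (rule cross_lemma[OF h1 sc])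
    have k2: "c = nb * (c * Y - X * s)"
      unfolding c_def s_def X_def Y_def by (rule cross_lemma[OF h2 sc])
    have "nr * (c * Y - X * s) = nb * (c * Y - X * s)" using k1 k2 by linarith
    then have "(nb - nr) * (c * Y - X * s) = 0" by (simp only: left_diff_distrib)
    then have K0: "c * Y - X * s = 0" using nrb by simp
    have "c = nr * 0" using k1 unfolding K0 .
    then show ?thesis by simp
  qed
  have rp0: "\<rho>' t0 = 0"
  proof -
    have "\<rho>' t0 / Sg \<rho> \<rho>' t0 = 0" using cross_eq[of t0 \<rho> \<rho>'] c0 unfolding c_def by linarith
    moreover have "Sg \<rho> \<rho>' t0 \<noteq> 0" using Sg_pos[where \<rho>=\<rho> and \<rho>'=\<rho>' and t=t0] post by simp
    ultimately show ?thesis by simp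
  qed
  note Fr = at_flat[where \<rho>=\<rho> and \<rho>'=\<rho>' and t=t0 and n=nr, OF rp0 post nr]
    and Fb = at_flat[where \<rho>=\<rho> and \<rho>'=\<rho>' and t=t0 and n=nb, OF rp0 post nb]
  obtain wr where wr: "wr \<noteq> 0" "(fc nr Cr \<rho> \<rho>' has_vector_derivative wr) (at t0 within ?I)" using vr t0I by blast
  obtain wb where wb: "(fc nb Cb \<rho> \<rho>' has_vector_derivative wb) (at (\<phi> t0) within ?I)"
    using vb t0I unfolding fix0 by blast
  have "N1 nr \<rho> \<rho>' t0 * N2 nb \<rho> \<rho>' (\<phi> t0) - N2 nr \<rho> \<rho>' t0 * N1 nb \<rho> \<rho>' (\<phi> t0) = 0"
    by (rule det_zero(2)[OF del(1) t0I nr nb pos r p ph im eq wr(2) wr(1) wb])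
  note X = this[unfolded fix0 Fr(6,7) Fb(6,7)]
  have "(nb - nr) * sin t0 = nr * sin t0 * (nb * cos t0 - 1) - (nr * cos t0 - 1) * (nb * sin t0)"
    by (simp add: algebra_simps)
  then have "(nb - nr) * sin t0 = 0" using X by (simp only:)
  then have "sin t0 = 0" using nrb by simp
  moreover have "- pi < t0" "t0 < pi" using t0(1,2) del pi_gt_zero by linarith+
  ultimately have tz: "t0 = 0" using sin_eq_0_pi by blast
  show "\<phi> 0 = 0" using fix0 tz by simp
  show "\<rho>' 0 = 0" using rp0 tz by simp
  show "dd nr Cr \<rho> \<rho>' 0 = dd nb Cb \<rho> \<rho>' 0" using deq tz by (simp add: dr_def db_def)
qed


lemma N1_deriv0:
  assumes r: "(\<rho> has_real_derivative \<rho>' 0) (at 0 within S)"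
    and p: "(\<rho>' has_real_derivative Q) (at 0 within S)" and pos: "0 < \<rho> 0" and n: "1 < n"
    and z: "\<rho>' 0 = 0"
  shows "((\<lambda>t. N1 n \<rho> \<rho>' t) has_real_derivative 1 - (1 - n) * ((\<rho> 0 - Q) / \<rho> 0)) (at 0 within S)"
proof -
  obtain G where G: "((\<lambda>t. Sg \<rho> \<rho>' t) has_real_derivative G) (at 0 within S)"
    using ex_deriv_Sg[OF r p pos] by blast
  obtain P where P: "((\<lambda>t. Ph n \<rho> \<rho>' t) has_real_derivative P) (at 0 within S)"
    using ex_derivs(4)[OF r p pos n] by blast
  note F = at_flat[where \<rho>=\<rho> and \<rho>'=\<rho>' and t=0 and n=n, OF z pos n]
  have Sp: "Sg \<rho> \<rho>' 0 \<noteq> 0" using F(1) pos by simp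
  have e1: "(\<lambda>t. nu1 \<rho> \<rho>' t) = (\<lambda>t. (\<rho> t * sin t - \<rho>' t * cos t) / Sg \<rho> \<rho>' t)"
    by (simp add: nu1_def)
  have W: "((\<lambda>t. nu1 \<rho> \<rho>' t) has_real_derivative (\<rho> 0 - Q) / \<rho> 0) (at 0 within S)"
  proof -
    have "((\<lambda>t. nu1 \<rho> \<rho>' t) has_real_derivative
      (((\<rho>' 0 * sin 0 + \<rho> 0 * cos 0) - (Q * cos 0 - \<rho>' 0 * sin 0)) * Sg \<rho> \<rho>' 0 - (\<rho> 0 * sin 0 - \<rho>' 0 * cos 0) * G) / (Sg \<rho> \<rho>' 0 * Sg \<rho> \<rho>' 0)) (at 0 within S)"
      unfolding e1 by (rule DERIV_divide[OF deriv_A1[OF r p] G Sp])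
    moreover have "(((\<rho>' 0 * sin 0 + \<rho> 0 * cos 0) - (Q * cos 0 - \<rho>' 0 * sin 0)) * Sg \<rho> \<rho>' 0 - (\<rho> 0 * sin 0 - \<rho>' 0 * cos 0) * G) / (Sg \<rho> \<rho>' 0 * Sg \<rho> \<rho>' 0) = (\<rho> 0 - Q) / \<rho> 0"
      using pos by (simp add: F(1) z)
    ultimately show ?thesis by simp
  qed
  have e5: "(\<lambda>t. N1 n \<rho> \<rho>' t) = (\<lambda>t. sin t - Ph n \<rho> \<rho>' t * nu1 \<rho> \<rho>' t)"
    by (simp add: N1_def)
  have D: "((\<lambda>t. N1 n \<rho> \<rho>' t) has_real_derivative cos 0 - (P * nu1 \<rho> \<rho>' 0 + (\<rho> 0 - Q) / \<rho> 0 * Ph n \<rho> \<rho>' 0)) (at 0 within S)"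
    unfolding e5 by (rule DERIV_diff[OF DERIV_sin[THEN DERIV_subset, OF subset_UNIV] DERIV_mult[OF P W]])
  have eqn: "cos 0 - (P * nu1 \<rho> \<rho>' 0 + (\<rho> 0 - Q) / \<rho> 0 * Ph n \<rho> \<rho>' 0) = 1 - (1 - n) * ((\<rho> 0 - Q) / \<rho> 0)"
    by (simp add: F)
  show ?thesis unfolding eqn[symmetric] by (rule D)
qed

lemma final_alg:
  fixes nr nb k \<rho>0 d0 ph :: real
  assumes nr: "1 < nr" and nrb: "nr < nb" and r0: "0 < \<rho>0" and d0: "0 < d0"
    and E1: "(1 - (1 - nr) * (1 - k)) * (nb - 1) - (nr - 1) * (1 - (1 - nb) * (1 - k)) * ph = 0"
    and E2: "\<rho>0 + d0 * (1 - (1 - nr) * (1 - k)) / nr = ph * (\<rho>0 + d0 * (1 - (1 - nb) * (1 - k)) / nb)"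
  shows "(nr / (nr - 1) - k) * (nb / (nb - 1) - k) = - (\<rho>0 / d0) * (nr / (nr - 1)) * (nb / (nb - 1))"
proof -
  define ar ab where "ar = 1 - (1 - nr) * (1 - k)" and "ab = 1 - (1 - nb) * (1 - k)"
  define Fr Fb where "Fr = \<rho>0 + d0 * ar / nr" and "Fb = \<rho>0 + d0 * ab / nb"
  have E1': "ar * (nb - 1) = (nr - 1) * ab * ph" using E1 unfolding ar_def ab_def by simp
  have E2': "Fr = ph * Fb" using E2 unfolding ar_def ab_def Fr_def Fb_def by simp
  have H: "ar * (nb - 1) * Fb = (nr - 1) * ab * Fr" using E1' E2' by simp
  have nz: "nr \<noteq> 0" "nb \<noteq> 0" using nr nrb by auto
  have "nr * nb * (ar * (nb - 1) * Fb - (nr - 1) * ab * Fr) = (nb - nr) * (\<rho>0 * nr * nb + d0 * ar * ab)"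
    unfolding Fr_def Fb_def ar_def ab_def using nz by (simp add: field_simps)
  then have "(nb - nr) * (\<rho>0 * nr * nb + d0 * ar * ab) = 0" using H by simp
  then have K: "\<rho>0 * nr * nb + d0 * ar * ab = 0" using nrb by simp
  have u: "nr - 1 \<noteq> 0" "nb - 1 \<noteq> 0" using nr nrb by auto
  have a1: "nr / (nr - 1) - k = ar / (nr - 1)" unfolding ar_def using u by (simp add: field_simps)
  have a2: "nb / (nb - 1) - k = ab / (nb - 1)" unfolding ab_def using u by (simp add: field_simps)
  have aa: "ar * ab = - \<rho>0 * nr * nb / d0" using K d0 by (simp add: field_simps)
  have "(nr / (nr - 1) - k) * (nb / (nb - 1) - k) = (ar * ab) / ((nr - 1) * (nb - 1))"
    by (simp only: a1, simp only: a2, simp)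
  also have "\<dots> = - (\<rho>0 / d0) * (nr / (nr - 1)) * (nb / (nb - 1))"
    unfolding aa by simp
  finally show ?thesis .
qed


lemma final2:
  fixes Dr Db k k0 :: real
  assumes "Db < Dr" "0 < k0" "0 < Db" and Q: "(Dr - k) * (Db - k) = - k0 * Dr * Db"
  shows "0 \<le> (Dr - Db)\<^sup>2 - 4 * k0 * Dr * Db \<and>
    (k = (Dr + Db + sqrt ((Dr - Db)\<^sup>2 - 4 * k0 * Dr * Db)) / 2 \<or>
     k = (Dr + Db - sqrt ((Dr - Db)\<^sup>2 - 4 * k0 * Dr * Db)) / 2) \<and> Db < k \<and> k < Dr"
proof -
  have d: "(Dr - Db)\<^sup>2 - 4 * k0 * Dr * Db = (2 * k - Dr - Db)\<^sup>2"
  proof -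
    have "(2 * k - Dr - Db)\<^sup>2 = (Dr - Db)\<^sup>2 + 4 * ((Dr - k) * (Db - k))" by algebra
    then show ?thesis using Q by simp
  qed
  have sq: "sqrt ((Dr - Db)\<^sup>2 - 4 * k0 * Dr * Db) = \<bar>2 * k - Dr - Db\<bar>" unfolding d by simp
  have neg: "(Dr - k) * (Db - k) < 0" using Q assms(1,2,3) by (simp add: mult_pos_pos)
  have b1: "Db < k"
  proof (rule ccontr)
    assume "\<not> Db < k"
    then have "0 \<le> (Dr - k) * (Db - k)" using assms(1) by (intro mult_nonneg_nonneg) auto
    then show False using neg by simp
  qed
  have b2: "k < Dr"
  proof (rule ccontr)
    assume "\<not> k < Dr"
    then have "0 \<le> (Dr - k) * (Db - k)" using assms(1) by (intro mult_nonpos_nonpos) auto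
    then show False using neg by simp
  qed
  show ?thesis using b1 b2 unfolding d sq by (auto simp: abs_if)
qed

lemma main_unpacked:
  assumes nr: "1 < nr" and nrb: "nr < nb"
    and del: "0 < del" "del < pi / 2"
    and pos: "\<forall>x\<in>{-del..del}. 0 < \<rho> x"
    and r: "\<forall>x\<in>{-del..del}. (\<rho> has_real_derivative \<rho>' x) (at x within {-del..del})"
    and p: "\<forall>x\<in>{-del..del}. (\<rho>' has_real_derivative \<rho>'' x) (at x within {-del..del})"
    and dpos: "\<forall>x\<in>{-del..del}. 0 < dc nr Cr \<rho> \<rho>' x \<and> 0 < dc nb Cb \<rho> \<rho>' x"
    and vr: "\<forall>x\<in>{-del..del}. \<exists>v. v \<noteq> 0 \<and> (fc nr Cr \<rho> \<rho>' has_vector_derivative v) (at x within {-del..del})"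
    and vb: "\<forall>x\<in>{-del..del}. \<exists>v. v \<noteq> 0 \<and> (fc nb Cb \<rho> \<rho>' has_vector_derivative v) (at x within {-del..del})"
    and ph: "\<forall>x\<in>{-del..del}. (\<phi> has_real_derivative \<phi>' x) (at x within {-del..del})"
    and im: "\<phi> ` {-del..del} \<subseteq> {-del..del}"
    and eq: "\<forall>x\<in>{-del..del}. fc nr Cr \<rho> \<rho>' x = fc nb Cb \<rho> \<rho>' (\<phi> x)"
  shows "(nr / (nr - 1) - \<rho>'' 0 / \<rho> 0) * (nb / (nb - 1) - \<rho>'' 0 / \<rho> 0)
     = - (\<rho> 0 / dc nr Cr \<rho> \<rho>' 0) * (nr / (nr - 1)) * (nb / (nb - 1))"
proof -
  let ?I = "{-del..del}"
  have nb: "1 < nb" using nr nrb by simp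
  have z: "0 \<in> ?I" using del by simp
  note FZ = fixed_zero[OF del nr nrb pos r p ph im eq dpos vr vb]
  have ph0: "\<phi> 0 = 0" and z': "\<rho>' 0 = 0" and deq: "dd nr Cr \<rho> \<rho>' 0 = dd nb Cb \<rho> \<rho>' 0" using FZ by auto
  have r0: "(\<rho> has_real_derivative \<rho>' 0) (at 0 within ?I)" using r z by blast
  have p0: "(\<rho>' has_real_derivative \<rho>'' 0) (at 0 within ?I)" using p z by blast
  have pos0: "0 < \<rho> 0" using pos z by blast
  define k where "k = \<rho>'' 0 / \<rho> 0"
  have kk: "(\<rho> 0 - \<rho>'' 0) / \<rho> 0 = 1 - k" unfolding k_def using pos0 by (simp add: field_simps)
  note Fr = at_flat[where \<rho>=\<rho> and \<rho>'=\<rho>' and t=0 and n=nr, OF z' pos0 nr]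
  note Fb = at_flat[where \<rho>=\<rho> and \<rho>'=\<rho>' and t=0 and n=nb, OF z' pos0 nb]
  have Zr: "((\<lambda>t. N1 nr \<rho> \<rho>' t) has_real_derivative 1 - (1 - nr) * (1 - k)) (at 0 within ?I)"
    using N1_deriv0[OF r0 p0 pos0 nr z'] unfolding kk .
  have Zb: "((\<lambda>t. N1 nb \<rho> \<rho>' t) has_real_derivative 1 - (1 - nb) * (1 - k)) (at 0 within ?I)"
    using N1_deriv0[OF r0 p0 pos0 nb z'] unfolding kk .
  obtain Z2r where Z2r: "((\<lambda>t. N2 nr \<rho> \<rho>' t) has_real_derivative Z2r) (at 0 within ?I)"
    using ex_derivs(6)[OF r0 p0 pos0 nr] by blast
  obtain Z2b where Z2b: "((\<lambda>t. N2 nb \<rho> \<rho>' t) has_real_derivative Z2b) (at 0 within ?I)"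
    using ex_derivs(6)[OF r0 p0 pos0 nb] by blast
  have ph0d: "(\<phi> has_real_derivative \<phi>' 0) (at 0 within ?I)" using ph z by blast
  have Zb': "((\<lambda>t. N1 nb \<rho> \<rho>' t) has_real_derivative 1 - (1 - nb) * (1 - k)) (at (\<phi> 0) within \<phi> ` ?I)"
    unfolding ph0 by (rule DERIV_subset[OF Zb im])
  have Z2b': "((\<lambda>t. N2 nb \<rho> \<rho>' t) has_real_derivative Z2b) (at (\<phi> 0) within \<phi> ` ?I)"
    unfolding ph0 by (rule DERIV_subset[OF Z2b im])
  have C1: "((\<lambda>t. N1 nb \<rho> \<rho>' (\<phi> t)) has_real_derivative (1 - (1 - nb) * (1 - k)) * \<phi>' 0) (at 0 within ?I)"
    using DERIV_image_chain[OF Zb' ph0d] by (simp add: o_def)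
  have C2: "((\<lambda>t. N2 nb \<rho> \<rho>' (\<phi> t)) has_real_derivative Z2b * \<phi>' 0) (at 0 within ?I)"
    using DERIV_image_chain[OF Z2b' ph0d] by (simp add: o_def)
  have detz: "N1 nr \<rho> \<rho>' x * N2 nb \<rho> \<rho>' (\<phi> x) - N2 nr \<rho> \<rho>' x * N1 nb \<rho> \<rho>' (\<phi> x) = 0" if x: "x \<in> ?I" for x
  proof -
    obtain wr where wr: "wr \<noteq> 0" "(fc nr Cr \<rho> \<rho>' has_vector_derivative wr) (at x within ?I)" using vr x by blast
    have px: "\<phi> x \<in> ?I" using im x by blast
    obtain wb where wb: "(fc nb Cb \<rho> \<rho>' has_vector_derivative wb) (at (\<phi> x) within ?I)" using vb px by blast
    show ?thesis by (rule det_zero(2)[OF del(1) x nr nb pos r p ph im eq wr(2) wr(1) wb])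
  qed
  have E1: "(1 - (1 - nr) * (1 - k)) * N2 nb \<rho> \<rho>' (\<phi> 0) + Z2b * \<phi>' 0 * N1 nr \<rho> \<rho>' 0
      - ((Z2r * N1 nb \<rho> \<rho>' (\<phi> 0)) + (1 - (1 - nb) * (1 - k)) * \<phi>' 0 * N2 nr \<rho> \<rho>' 0) = 0"
    using deriv_eq_on[OF del(1) z detz DERIV_diff[OF DERIV_mult[OF Zr C2] DERIV_mult[OF Z2r C1]] DERIV_const[of 0]]
    by simp
  then have E1': "(1 - (1 - nr) * (1 - k)) * (nb - 1) - (nr - 1) * (1 - (1 - nb) * (1 - k)) * \<phi>' 0 = 0"
    by (simp add: ph0 Fr Fb algebra_simps)
  obtain wr where wr: "wr \<noteq> 0" "(fc nr Cr \<rho> \<rho>' has_vector_derivative wr) (at 0 within ?I)" using vr z by blast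
  obtain wb where wb: "(fc nb Cb \<rho> \<rho>' has_vector_derivative wb) (at 0 within ?I)" using vb z by blast
  have wb': "(fc nb Cb \<rho> \<rho>' has_vector_derivative wb) (at (\<phi> 0) within ?I)" using wb ph0 by simp
  have wE: "wr = \<phi>' 0 *\<^sub>R wb" by (rule det_zero(1)[OF del(1) z nr nb pos r p ph im eq wr(2) wr(1) wb'])
  have fst_formula: "fst w = \<rho> 0 + dd n C \<rho> \<rho>' 0 * (1 - (1 - n) * (1 - k)) / n"
    if n: "1 < n" and w: "(fc n C \<rho> \<rho>' has_vector_derivative w) (at 0 within ?I)" for n C w
  proof -
    obtain Dd M1 where M1: "((\<lambda>t. m1 n \<rho> \<rho>' t) has_real_derivative M1) (at 0 within ?I)"
      and fw: "fst w = \<rho>' 0 * sin 0 + cos 0 * \<rho> 0 + (Dd * m1 n \<rho> \<rho>' 0 + M1 * dd n C \<rho> \<rho>' 0)"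
      using fc_fst[OF del(1) z n pos r p w] by blast
    have Z: "((\<lambda>t. N1 n \<rho> \<rho>' t) has_real_derivative 1 - (1 - n) * (1 - k)) (at 0 within ?I)"
      using N1_deriv0[OF r0 p0 pos0 n z'] unfolding kk .
    have me: "(\<lambda>t. m1 n \<rho> \<rho>' t) = (\<lambda>t. N1 n \<rho> \<rho>' t / n)" by (simp add: m1_def)
    have M1': "((\<lambda>t. m1 n \<rho> \<rho>' t) has_real_derivative ((1 - (1 - n) * (1 - k)) * n - N1 n \<rho> \<rho>' 0 * 0) / (n * n)) (at 0 within ?I)"
      unfolding me using n by (intro DERIV_divide[OF Z DERIV_const]) auto
    have "M1 = ((1 - (1 - n) * (1 - k)) * n - N1 n \<rho> \<rho>' 0 * 0) / (n * n)"
      by (rule deriv_unique_I[OF del(1) z M1 M1'])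
    then have "M1 = (1 - (1 - n) * (1 - k)) / n" using n by simp
    moreover have "m1 n \<rho> \<rho>' 0 = 0" using at_flat(8)[where \<rho>=\<rho> and \<rho>'=\<rho>' and t=0 and n=n, OF z' pos0 n] by simp
    ultimately show ?thesis using fw z' by simp
  qed
  have E2: "\<rho> 0 + dd nr Cr \<rho> \<rho>' 0 * (1 - (1 - nr) * (1 - k)) / nr
      = \<phi>' 0 * (\<rho> 0 + dd nr Cr \<rho> \<rho>' 0 * (1 - (1 - nb) * (1 - k)) / nb)"
  proof -
    have "fst wr = \<phi>' 0 * fst wb" using wE by simp
    then show ?thesis using fst_formula[OF nr wr(2)] fst_formula[OF nb wb] deq by simp
  qed
  have d0: "0 < dd nr Cr \<rho> \<rho>' 0" using dpos z by (simp add: dc_eq)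
  have "(nr / (nr - 1) - k) * (nb / (nb - 1) - k) = - (\<rho> 0 / dd nr Cr \<rho> \<rho>' 0) * (nr / (nr - 1)) * (nb / (nb - 1))"
    by (rule final_alg[OF nr nrb pos0 d0 E1' E2])
  then show ?thesis by (simp add: k_def dc_eq)
qed


theorem corollary5p9:
  fixes nr nb del Cr Cb :: real and \<rho> \<rho>' \<rho>'' \<phi> :: "real \<Rightarrow> real"
  assumes "1 < nr" and "nr < nb"
    and "local_solution nr nb del \<rho> \<rho>' \<rho>'' Cr Cb \<phi>"
  shows "let \<rho>0 = \<rho> 0; d0 = dc nr Cr \<rho> \<rho>' 0; k0 = \<rho>0 / d0;
             \<Delta>r = nr / (nr - 1); \<Delta>b = nb / (nb - 1);
             disc = (\<Delta>r - \<Delta>b)\<^sup>2 - 4 * k0 * \<Delta>r * \<Delta>b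
         in 0 \<le> disc \<and>
            (\<rho>'' 0 / \<rho>0 = (2 + (\<Delta>r / nr + \<Delta>b / nb) + sqrt disc) / 2 \<or>
             \<rho>'' 0 / \<rho>0 = (2 + (\<Delta>r / nr + \<Delta>b / nb) - sqrt disc) / 2) \<and>
            \<Delta>b < \<rho>'' 0 / \<rho>0 \<and> \<rho>'' 0 / \<rho>0 < \<Delta>r"
proof -
  note L = assms(3)[unfolded local_solution_def]
  let ?I = "{-del..del}"
  from L obtain \<phi>' where
    del1: "0 < del" and del2: "del < pi / 2"
    and pos: "\<forall>x\<in>?I. 0 < \<rho> x"
    and r: "\<forall>x\<in>?I. (\<rho> has_real_derivative \<rho>' x) (at x within ?I)"
    and p: "\<forall>x\<in>?I. (\<rho>' has_real_derivative \<rho>'' x) (at x within ?I)"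
    and cont: "continuous_on ?I \<rho>''"
    and dpos: "\<forall>x\<in>?I. 0 < dc nr Cr \<rho> \<rho>' x \<and> 0 < dc nb Cb \<rho> \<rho>' x"
    and vr: "\<forall>x\<in>?I. \<exists>v. v \<noteq> 0 \<and> (fc nr Cr \<rho> \<rho>' has_vector_derivative v) (at x within ?I)"
    and vb: "\<forall>x\<in>?I. \<exists>v. v \<noteq> 0 \<and> (fc nb Cb \<rho> \<rho>' has_vector_derivative v) (at x within ?I)"
    and ph: "\<forall>x\<in>?I. (\<phi> has_real_derivative \<phi>' x) (at x within ?I)"
    and phc: "continuous_on ?I \<phi>'"
    and im: "\<phi> ` ?I \<subseteq> ?I"
    and eq: "\<forall>x\<in>?I. fc nr Cr \<rho> \<rho>' x = fc nb Cb \<rho> \<rho>' (\<phi> x)"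
    by (elim conjE exE) blast
  have del: "0 < del" "del < pi / 2" using del1 del2 by auto
  have z: "0 \<in> {-del..del}" using del by simp
  have Q: "(nr / (nr - 1) - \<rho>'' 0 / \<rho> 0) * (nb / (nb - 1) - \<rho>'' 0 / \<rho> 0)
     = - (\<rho> 0 / dc nr Cr \<rho> \<rho>' 0) * (nr / (nr - 1)) * (nb / (nb - 1))"
    by (rule main_unpacked[OF assms(1,2) del pos r p dpos vr vb ph im eq])
  have pos0: "0 < \<rho> 0" using pos z by blast
  have d0: "0 < dc nr Cr \<rho> \<rho>' 0" using dpos z by blast
  have k0: "0 < \<rho> 0 / dc nr Cr \<rho> \<rho>' 0" using pos0 d0 by simp
  have u: "0 < nr - 1" "0 < nb - 1" using assms(1,2) by auto
  have Dbr: "nb / (nb - 1) < nr / (nr - 1)"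
    using u assms(1,2) by (simp add: field_simps)
  have Db: "0 < nb / (nb - 1)" using u by simp
  have F: "0 \<le> (nr / (nr - 1) - nb / (nb - 1))\<^sup>2 - 4 * (\<rho> 0 / dc nr Cr \<rho> \<rho>' 0) * (nr / (nr - 1)) * (nb / (nb - 1)) \<and>
    (\<rho>'' 0 / \<rho> 0 = (nr / (nr - 1) + nb / (nb - 1) + sqrt ((nr / (nr - 1) - nb / (nb - 1))\<^sup>2 - 4 * (\<rho> 0 / dc nr Cr \<rho> \<rho>' 0) * (nr / (nr - 1)) * (nb / (nb - 1)))) / 2 \<or>
     \<rho>'' 0 / \<rho> 0 = (nr / (nr - 1) + nb / (nb - 1) - sqrt ((nr / (nr - 1) - nb / (nb - 1))\<^sup>2 - 4 * (\<rho> 0 / dc nr Cr \<rho> \<rho>' 0) * (nr / (nr - 1)) * (nb / (nb - 1)))) / 2) \<and>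
    nb / (nb - 1) < \<rho>'' 0 / \<rho> 0 \<and> \<rho>'' 0 / \<rho> 0 < nr / (nr - 1)"
    by (rule final2[OF Dbr k0 Db Q])
  have a1: "nr / (nr - 1) / nr = 1 / (nr - 1)" "nb / (nb - 1) / nb = 1 / (nb - 1)"
    using u assms(1,2) by (simp_all add: field_simps)
  have a2: "nr / (nr - 1) = 1 + 1 / (nr - 1)" "nb / (nb - 1) = 1 + 1 / (nb - 1)"
    using u by (simp_all add: field_simps)
  have "2 + (nr / (nr - 1) / nr + nb / (nb - 1) / nb) = 2 + (1 / (nr - 1) + 1 / (nb - 1))"
    by (simp only: a1)
  also have "\<dots> = nr / (nr - 1) + nb / (nb - 1)" unfolding a2 by simp
  finally have two: "2 + (nr / (nr - 1) / nr + nb / (nb - 1) / nb) = nr / (nr - 1) + nb / (nb - 1)" .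
  show ?thesis unfolding Let_def two using F by simp
qed

end
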